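(* Under Assumptions 1, 2 and 3, the limit $R_Q(B)=\lim_{n\to\infty}-\frac1n\log\mathbb{E}_Q[L_n^2\mathbf{1}_{M_n\in B}]$ exists, is finite, and $$R_Q(B)=\inf_{m\in B,\,w\in\mathbb{R}}\{w+J_P(m,w)\}=\inf_{m\in B,\,w\in\mathbb{R}}\{2w+J_Q(m,w)\}.$$
   Context: Setting. For each $n\ge1$, $\mathbf{X}_n$ is a random element of $\Lambda_n=(\mathbb{R}^d)^n$, and $P_n$, $Q_n$ are two mutually absolutely continuous probability measures on $\Lambda_n$. Let $M_n:\Lambda_n\to\mathbb{R}^D$ be a measurable map, and let $B\subset\mathbb{R}^D$ be measurable, with interior $B^\circ$ and closure $\bar B$. Define $L_n=dP_n/dQ_n$ and $W_n=-\frac1n\log L_n$. $\mathbb{E}_P,\mathbb{E}_Q$ denote expectations under $P_n,Q_n$. A rate function is a lower semicontinuous function with values in $[0,\infty]$; it is good if its level sets are compact. A sequence $Z_n$ satisfies the LDP under $R_n$ with rate function $I$ if $-\inf_{G^\circ}I\le\liminf_n\frac1n\log R_n(Z_n\in G)\le\limsup_n\frac1n\log R_n(Z_n\in G)\le-\inf_{\bar G}I$ for all measurable $G$. Assumption 1: $M_n$ satisfies the LDP under $P_n$ with a good rate function $I_P$, $I_P(B):=\inf_{m\in B}I_P(m)<\infty$, and $\lim_{n}-\frac1n\log P_n(M_n\in B)=I_P(B)$. Assumption 2: for some $\delta>0$, $\limsup_{n}\frac1n\log\mathbb{E}_Q[L_n^{2+\delta}\mathbf{1}_{M_n\in\bar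 B}]<\infty$. Assumption 3: (a) $(M_n,W_n)$ satisfies the LDP under $P_n$ on $\mathbb{R}^D\times\mathbb{R}$ with good rate function $J_P$; (b) $(M_n,W_n)$ satisfies the LDP under $Q_n$ with good rate function $J_Q$; (c) $J_P$ and $J_Q$ have the same non-empty domain; (d) $\inf_{B\times\mathbb{R}}\{2w+J_Q(m,w)\}=\inf_{B^\circ\times\mathbb{R}}\{2w+J_Q(m,w)\}=\inf_{\bar B\times\mathbb{R}}\{2w+J_Q(m,w)\}$. *)

theory Defs
  imports "HOL-Probability.Probability"
begin

definition lower_semicont :: "('b::topological_space \<Rightarrow> ereal) \<Rightarrow> bool" where
  "lower_semicont f \<longleftrightarrow> (\<forall>x. \<forall>a. a < f x \<longrightarrow> eventually (\<lambda>y. a < f y) (nhds x))"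

definition rate_function :: "('b::topological_space \<Rightarrow> ereal) \<Rightarrow> bool" where
  "rate_function I \<longleftrightarrow> lower_semicont I \<and> (\<forall>x. 0 \<le> I x)"

definition good_rate_function :: "('b::topological_space \<Rightarrow> ereal) \<Rightarrow> bool" where
  "good_rate_function I \<longleftrightarrow> rate_function I \<and> (\<forall>a::real. compact {x. I x \<le> ereal a})"

definition nlog :: "nat \<Rightarrow> ennreal \<Rightarrow> ereal" where
  "nlog n e = (if e = 0 then -\<infinity> else if e = \<infinity> then \<infinity>
               else ereal (ln (enn2real e) / real n))"

definition LDP :: "(nat \<Rightarrow> 'a measure) \<Rightarrow> (nat \<Rightarrow> 'a \<Rightarrow> 'b::topological_space)
                   \<Rightarrow> ('b \<Rightarrow> ereal) \<Rightarrow> bool" where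
  "LDP R Z I \<longleftrightarrow> (\<forall>G \<in> sets borel.
      - (INF x\<in>interior G. I x)
        \<le> liminf (\<lambda>n. nlog n (emeasure (R n) {\<omega> \<in> space (R n). Z n \<omega> \<in> G}))
    \<and> limsup (\<lambda>n. nlog n (emeasure (R n) {\<omega> \<in> space (R n). Z n \<omega> \<in> G}))
        \<le> - (INF x\<in>closure G. I x))"

text \<open>The likelihood ratio L_n = dP_n/dQ_n (a version of the Radon-Nikodym derivative)
  and W_n = -(1/n) log L_n.\<close>
definition LR :: "(nat \<Rightarrow> 'a measure) \<Rightarrow> (nat \<Rightarrow> 'a measure) \<Rightarrow> nat \<Rightarrow> 'a \<Rightarrow> real" where
  "LR P Q n x = enn2real (RN_deriv (Q n) (P n) x)"

definition Wn :: "(nat \<Rightarrow> 'a measure) \<Rightarrow> (nat \<Rightarrow> 'a measure) \<Rightarrow> nat \<Rightarrow> 'a \<Rightarrow> real" where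
  "Wn P Q n x = - ln (LR P Q n x) / real n"

end

theory Submission
  imports Defs
begin


lemma nlog_less_iff:
  assumes "n > 0"
  shows "nlog n e < ereal c \<longleftrightarrow> e < ennreal (exp (real n * c))"
proof (cases "e = 0")
  case True then show ?thesis by (simp add: nlog_def)
next
  case F: False
  show ?thesis
  proof (cases "e = \<infinity>")
    case True then show ?thesis by (simp add: nlog_def)
  next
    case False
    then obtain t where t: "e = ennreal t" "t \<ge> 0" by (cases e) auto
    with F have tp: "t > 0" by auto
    have "nlog n e = ereal (ln t / real n)" using F False t by (simp add: nlog_def)
    moreover have "(ln t / real n < c) \<longleftrightarrow> ln t < real n * c" using assms
      by (simp add: divide_less_eq mult.commute)
    moreover have "ln t < real n * c \<longleftrightarrow> t < exp (real n * c)" using tp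
      by (metis exp_less_cancel_iff exp_ln)
    moreover have "ennreal t < ennreal (exp (real n * c)) \<longleftrightarrow> t < exp (real n * c)"
      using tp by (simp add: ennreal_less_iff)
    ultimately show ?thesis using t by simp
  qed
qed

lemma less_nlog_iff:
  assumes "n > 0"
  shows "ereal c < nlog n e \<longleftrightarrow> ennreal (exp (real n * c)) < e"
proof (cases "e = 0")
  case True then show ?thesis by (simp add: nlog_def)
next
  case F: False
  show ?thesis
  proof (cases "e = \<infinity>")
    case True then show ?thesis by (simp add: nlog_def)
  next
    case False
    then obtain t where t: "e = ennreal t" "t \<ge> 0" by (cases e) auto
    with F have tp: "t > 0" by auto
    have "nlog n e = ereal (ln t / real n)" using F False t by (simp add: nlog_def)
    moreover have "(c < ln t / real n) \<longleftrightarrow> real n * c < ln t" using assms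
      by (simp add: less_divide_eq mult.commute)
    moreover have "real n * c < ln t \<longleftrightarrow> exp (real n * c) < t" using tp
      by (metis exp_less_cancel_iff exp_ln)
    moreover have "ennreal (exp (real n * c)) < ennreal t \<longleftrightarrow> exp (real n * c) < t"
      using tp by (simp add: ennreal_less_iff)
    ultimately show ?thesis using t by simp
  qed
qed

lemma LDP_upperE:
  assumes "LDP R Z I" "G \<in> sets borel" "- (INF x\<in>closure G. I x) < ereal c"
  shows "eventually (\<lambda>n. emeasure (R n) {\<omega> \<in> space (R n). Z n \<omega> \<in> G} < ennreal (exp (real n * c))) sequentially"
proof -
  have "limsup (\<lambda>n. nlog n (emeasure (R n) {\<omega> \<in> space (R n). Z n \<omega> \<in> G})) < ereal c"
    using assms unfolding LDP_def by (meson order.strict_trans1)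
  then have "eventually (\<lambda>n. nlog n (emeasure (R n) {\<omega> \<in> space (R n). Z n \<omega> \<in> G}) < ereal c) sequentially"
    by (rule Limsup_lessD)
  then show ?thesis using eventually_gt_at_top[of 0]
    by eventually_elim (simp add: nlog_less_iff)
qed

lemma LDP_lowerE:
  assumes "LDP R Z I" "G \<in> sets borel" "ereal c < - (INF x\<in>interior G. I x)"
  shows "eventually (\<lambda>n. ennreal (exp (real n * c)) < emeasure (R n) {\<omega> \<in> space (R n). Z n \<omega> \<in> G}) sequentially"
proof -
  have "ereal c < liminf (\<lambda>n. nlog n (emeasure (R n) {\<omega> \<in> space (R n). Z n \<omega> \<in> G}))"
    using assms unfolding LDP_def by (meson order.strict_trans2)
  then have "eventually (\<lambda>n. ereal c < nlog n (emeasure (R n) {\<omega> \<in> space (R n). Z n \<omega> \<in> G})) sequentially"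
    by (rule less_LiminfD)
  then show ?thesis using eventually_gt_at_top[of 0]
    by eventually_elim (simp add: less_nlog_iff)
qed



locale sp =
  fixes P Q :: "nat \<Rightarrow> (nat \<Rightarrow> 'e::euclidean_space) measure"
    and M :: "nat \<Rightarrow> (nat \<Rightarrow> 'e) \<Rightarrow> 'm::euclidean_space"
  assumes sets_P: "\<And>n. sets (P n) = sets (\<Pi>\<^sub>M i\<in>{..<n}. (borel :: 'e measure))"
    and sets_Q: "\<And>n. sets (Q n) = sets (\<Pi>\<^sub>M i\<in>{..<n}. (borel :: 'e measure))"
    and prob_P: "\<And>n. prob_space (P n)"
    and prob_Q: "\<And>n. prob_space (Q n)"
    and ac_PQ: "\<And>n. absolutely_continuous (Q n) (P n)"
    and ac_QP: "\<And>n. absolutely_continuous (P n) (Q n)"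
    and M_meas: "\<And>n. M n \<in> borel_measurable (\<Pi>\<^sub>M i\<in>{..<n}. (borel :: 'e measure))"
begin

lemma sets_PQ: "sets (P n) = sets (Q n)" using sets_P sets_Q by simp
lemma space_PQ: "space (P n) = space (Q n)" using sets_PQ sets_eq_imp_space_eq by blast

lemma MQ[measurable]: "M n \<in> borel_measurable (Q n)"
  using M_meas measurable_cong_sets[OF sets_Q[symmetric] refl] by blast

lemma L_meas[measurable]: "LR P Q n \<in> borel_measurable (Q n)"
  unfolding LR_def by measurable

lemma W_meas[measurable]: "Wn P Q n \<in> borel_measurable (Q n)"
  unfolding Wn_def by measurable

lemma Z_meas: "(\<lambda>x. (M n x, Wn P Q n x)) \<in> borel_measurable (Q n)"
  by measurable

lemma Zset[measurable]: "G \<in> sets borel \<Longrightarrow> {x \<in> space (Q n). (M n x, Wn P Q n x) \<in> G} \<in> sets (Q n)"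
  using measurable_sets[OF Z_meas] by (simp add: vimage_def Int_def conj_commute)

lemma L_nonneg: "0 \<le> LR P Q n x" unfolding LR_def by simp

lemma dens:
  assumes f: "f \<in> borel_measurable (Q n)"
  shows "integral\<^sup>N (P n) f = (\<integral>\<^sup>+x. ennreal (LR P Q n x) * f x \<partial>Q n)"
proof -
  interpret Qs: prob_space "Q n" by (rule prob_Q)
  interpret Ps: prob_space "P n" by (rule prob_P)
  have "integral\<^sup>N (P n) f = (\<integral>\<^sup>+x. RN_deriv (Q n) (P n) x * f x \<partial>Q n)"
    by (rule Qs.RN_deriv_nn_integral[OF ac_PQ sets_PQ f])
  also have "\<dots> = (\<integral>\<^sup>+x. ennreal (LR P Q n x) * f x \<partial>Q n)"
  proof (rule nn_integral_cong_AE)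
    have "AE x in Q n. RN_deriv (Q n) (P n) x \<noteq> \<infinity>"
      by (rule Qs.RN_deriv_finite[OF Ps.sigma_finite_measure_axioms ac_PQ sets_PQ])
    then show "AE x in Q n. RN_deriv (Q n) (P n) x * f x = ennreal (LR P Q n x) * f x"
      by eventually_elim (simp add: LR_def ennreal_enn2real_if)
  qed
  finally show ?thesis .
qed

lemma dens_set:
  assumes "A \<in> sets (Q n)"
  shows "emeasure (P n) A = (\<integral>\<^sup>+x. ennreal (LR P Q n x) * indicator A x \<partial>Q n)"
proof -
  have "emeasure (P n) A = integral\<^sup>N (P n) (indicator A)"
    using assms sets_PQ by simp
  also have "\<dots> = (\<integral>\<^sup>+x. ennreal (LR P Q n x) * indicator A x \<partial>Q n)"
    by (rule dens) (use assms in measurable)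
  finally show ?thesis .
qed

lemma posAE: "AE x in Q n. 0 < LR P Q n x"
proof -
  let ?Z = "{x \<in> space (Q n). LR P Q n x = 0}"
  have Zs: "?Z \<in> sets (Q n)" by measurable
  have "emeasure (P n) ?Z = (\<integral>\<^sup>+x. ennreal (LR P Q n x) * indicator ?Z x \<partial>Q n)"
    by (rule dens_set[OF Zs])
  also have "\<dots> = (\<integral>\<^sup>+x. 0 \<partial>Q n)"
    by (rule nn_integral_cong) (auto split: split_indicator)
  finally have "?Z \<in> null_sets (P n)" using Zs sets_PQ by auto
  then have "?Z \<in> null_sets (Q n)" using ac_QP unfolding absolutely_continuous_def by auto
  then show ?thesis
    by (rule AE_I') (use L_nonneg in \<open>auto simp: less_le\<close>)
qed

lemma L_exp:
  assumes "n > 0" "0 < LR P Q n x"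
  shows "LR P Q n x = exp (- (real n * Wn P Q n x))"
  using assms by (simp add: Wn_def)

end


context sp begin

definition EQ :: "'m set \<Rightarrow> nat \<Rightarrow> ennreal" where
  "EQ B n = (\<integral>\<^sup>+ x. ennreal ((LR P Q n x)\<^sup>2) * indicator {x. M n x \<in> B} x \<partial>(Q n))"

lemma lower_bound:
  assumes ldp: "LDP Q (\<lambda>n x. (M n x, Wn P Q n x)) J"
    and Jnn: "\<And>z. 0 \<le> J z"
    and c: "ereal c < - (INF z\<in>interior B \<times> UNIV. ereal (2 * snd z) + J z)"
  shows "eventually (\<lambda>n. ennreal (exp (real n * c)) < EQ B n) sequentially"
proof -
  have "(INF z\<in>interior B \<times> UNIV. ereal (2 * snd z) + J z) < ereal (-c)"
    using c by (metis ereal_less_uminus_reorder uminus_ereal.simps(1))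
  then obtain m w where mw: "m \<in> interior B" "ereal (2 * w) + J (m, w) < ereal (-c)"
    unfolding INF_less_iff by auto
  then obtain j where j: "J (m,w) = ereal j" using Jnn[of "(m,w)"]
    by (cases "J (m,w)") auto
  with mw have lt: "2 * w + j < -c" by simp
  define r where "r = (-c - 2*w - j) / 4"
  have r: "r > 0" using lt unfolding r_def by simp
  define G where "G = interior B \<times> {v. v < w + r}"
  have Gopen: "open G" unfolding G_def by (intro open_Times) (auto simp: open_halfspace_component_lt open_Collect_less)
  then have Gb: "G \<in> sets borel" by auto
  have zG: "(m,w) \<in> G" using mw r unfolding G_def by auto
  have "(INF x\<in>interior G. J x) \<le> J (m,w)"
    using zG Gopen by (simp add: interior_open INF_lower)
  then have "- J (m,w) \<le> - (INF x\<in>interior G. J x)" by simp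
  moreover have "ereal (-j - r) < - J (m,w)" using r j by simp
  ultimately have "ereal (-j - r) < - (INF x\<in>interior G. J x)" by (rule order_less_le_trans[rotated])
  from LDP_lowerE[OF ldp Gb this]
  have ev: "eventually (\<lambda>n. ennreal (exp (real n * (-j - r))) < emeasure (Q n) {x \<in> space (Q n). (M n x, Wn P Q n x) \<in> G}) sequentially"
    by simp
  show ?thesis using ev eventually_gt_at_top[of 0]
  proof eventually_elim
    case (elim n)
    let ?S = "{x \<in> space (Q n). (M n x, Wn P Q n x) \<in> G}"
    let ?a = "exp (- (2 * real n * (w + r)))"
    have "(\<integral>\<^sup>+ x. ennreal ?a * indicator ?S x \<partial>Q n) \<le> EQ B n"
      unfolding EQ_def
    proof (rule nn_integral_mono_AE)
      show "AE x in Q n. ennreal ?a * indicator ?S x \<le> ennreal ((LR P Q n x)\<^sup>2) * indicator {x. M n x \<in> B} x"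
        using posAE[of n]
      proof eventually_elim
        case (elim x)
        show ?case
        proof (cases "x \<in> ?S")
          case True
          then have xB: "M n x \<in> B" and xw: "Wn P Q n x < w + r"
            unfolding G_def using interior_subset by auto
          have "LR P Q n x = exp (- (real n * Wn P Q n x))" using L_exp \<open>n>0\<close> elim by blast
          then have "(LR P Q n x)\<^sup>2 = exp (- (2 * real n * Wn P Q n x))"
            by (simp add: power2_eq_square exp_add[symmetric])
          moreover have "- (2 * real n * (w + r)) \<le> - (2 * real n * Wn P Q n x)"
            using xw \<open>n>0\<close> by (simp add: mult_left_mono)
          ultimately have "?a \<le> (LR P Q n x)\<^sup>2" by simp
          then show ?thesis using True xB by (simp add: ennreal_leI)
        qed simp
      qed
    qed
    moreover have "(\<integral>\<^sup>+ x. ennreal ?a * indicator ?S x \<partial>Q n) = ennreal ?a * emeasure (Q n) ?S"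
      by (rule nn_integral_cmult_indicator) (rule Zset[OF Gb])
    moreover have "ennreal ?a * ennreal (exp (real n * (-j - r))) < ennreal ?a * emeasure (Q n) ?S"
      using elim(1) by (simp add: ennreal_mult_strict_left_mono)
    moreover have "ennreal ?a * ennreal (exp (real n * (-j - r))) = ennreal (exp (real n * (-2*w - 3*r - j)))"
      by (simp add: ennreal_mult[symmetric] exp_add[symmetric] algebra_simps)
    moreover have "exp (real n * c) \<le> exp (real n * (-2*w - 3*r - j))"
    proof -
      have "c \<le> -2*w - 3*r - j" using lt unfolding r_def by (simp add: field_simps)
      then show ?thesis using \<open>n > 0\<close> by (simp add: mult_left_mono)
    qed
    ultimately show ?case
      by (metis (no_types, lifting) ennreal_leI order_le_less_trans order_less_le_trans)
  qed
qed

end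


context sp begin

lemma piece1:
  assumes "n > 0" "K \<ge> 0" "\<delta> > 0" and Bb: "B \<in> sets borel"
  shows "(\<integral>\<^sup>+ x. ennreal ((LR P Q n x)\<^sup>2) * indicator {x \<in> space (Q n). M n x \<in> closure B \<and> Wn P Q n x < -K} x \<partial>Q n)
     \<le> ennreal (exp (- (real n * \<delta> * K))) * (\<integral>\<^sup>+ x. ennreal ((LR P Q n x) powr (2 + \<delta>)) * indicator {x. M n x \<in> closure B} x \<partial>Q n)"
proof -
  have cB[measurable]: "closure B \<in> sets borel" by auto
  have "(\<integral>\<^sup>+ x. ennreal ((LR P Q n x)\<^sup>2) * indicator {x \<in> space (Q n). M n x \<in> closure B \<and> Wn P Q n x < -K} x \<partial>Q n)
     \<le> (\<integral>\<^sup>+ x. ennreal (exp (- (real n * \<delta> * K))) * (ennreal ((LR P Q n x) powr (2 + \<delta>)) * indicator {x. M n x \<in> closure B} x) \<partial>Q n)"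
  proof (rule nn_integral_mono_AE)
    show "AE x in Q n. ennreal ((LR P Q n x)\<^sup>2) * indicator {x \<in> space (Q n). M n x \<in> closure B \<and> Wn P Q n x < -K} x
        \<le> ennreal (exp (- (real n * \<delta> * K))) * (ennreal ((LR P Q n x) powr (2 + \<delta>)) * indicator {x. M n x \<in> closure B} x)"
      using posAE[of n]
    proof eventually_elim
      case (elim x)
      show ?case
      proof (cases "x \<in> {x \<in> space (Q n). M n x \<in> closure B \<and> Wn P Q n x < -K}")
        case True
        let ?L = "LR P Q n x" and ?W = "Wn P Q n x"
        have Le: "?L = exp (- (real n * ?W))" using L_exp assms(1) elim by blast
        have "?L powr \<delta> = exp (- (real n * ?W) * \<delta>)" using Le by (simp add: powr_def)
        moreover have "real n * K * \<delta> \<le> - (real n * ?W) * \<delta>"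
        proof -
          have "K \<le> - ?W" using True by auto
          then have "real n * K \<le> real n * (- ?W)" by (rule mult_left_mono) auto
          then show ?thesis using assms by (intro mult_right_mono) auto
        qed
        ultimately have "exp (real n * K * \<delta>) \<le> ?L powr \<delta>" by simp
        then have "1 \<le> exp (- (real n * \<delta> * K)) * ?L powr \<delta>"
          by (simp add: exp_minus field_simps mult.commute mult.left_commute)
        then have "?L\<^sup>2 \<le> exp (- (real n * \<delta> * K)) * (?L\<^sup>2 * ?L powr \<delta>)"
          by (metis mult.left_commute mult_le_cancel_left1 zero_le_power2 not_le order_less_le_trans zero_less_one
               mult.commute mult_left_mono mult_1_right)
        moreover have "?L powr (2 + \<delta>) = ?L\<^sup>2 * ?L powr \<delta>"
          using elim by (simp add: powr_add powr_numeral)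
        ultimately have "?L\<^sup>2 \<le> exp (- (real n * \<delta> * K)) * ?L powr (2 + \<delta>)" by simp
        then show ?thesis using True
          by (simp add: ennreal_mult[symmetric] ennreal_leI)
      qed simp
    qed
  qed
  also have "\<dots> = ennreal (exp (- (real n * \<delta> * K))) * (\<integral>\<^sup>+ x. ennreal ((LR P Q n x) powr (2 + \<delta>)) * indicator {x. M n x \<in> closure B} x \<partial>Q n)"
  proof (rule nn_integral_cmult)
    have "(\<lambda>x. indicator {x. M n x \<in> closure B} x :: ennreal) \<in> borel_measurable (Q n)"
    proof -
      have "(\<lambda>x. indicator {x. M n x \<in> closure B} x :: ennreal) = (\<lambda>x. indicator (closure B) (M n x))"
        by (auto simp: indicator_def)
      then show ?thesis by simp
    qed
    then show "(\<lambda>x. ennreal ((LR P Q n x) powr (2 + \<delta>)) * indicator {x. M n x \<in> closure B} x) \<in> borel_measurable (Q n)"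
      by measurable
  qed
  finally show ?thesis .
qed

lemma piece2:
  assumes "n > 0"
  shows "(\<integral>\<^sup>+ x. ennreal ((LR P Q n x)\<^sup>2) * indicator {x \<in> space (Q n). K \<le> Wn P Q n x} x \<partial>Q n)
     \<le> ennreal (exp (- (2 * real n * K)))"
proof -
  interpret Qs: prob_space "Q n" by (rule prob_Q)
  have "(\<integral>\<^sup>+ x. ennreal ((LR P Q n x)\<^sup>2) * indicator {x \<in> space (Q n). K \<le> Wn P Q n x} x \<partial>Q n)
     \<le> (\<integral>\<^sup>+ x. ennreal (exp (- (2 * real n * K))) \<partial>Q n)"
  proof (rule nn_integral_mono_AE)
    show "AE x in Q n. ennreal ((LR P Q n x)\<^sup>2) * indicator {x \<in> space (Q n). K \<le> Wn P Q n x} x \<le> ennreal (exp (- (2 * real n * K)))"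
      using posAE[of n]
    proof eventually_elim
      case (elim x)
      show ?case
      proof (cases "x \<in> {x \<in> space (Q n). K \<le> Wn P Q n x}")
        case True
        have "LR P Q n x = exp (- (real n * Wn P Q n x))" using L_exp assms elim by blast
        then have "(LR P Q n x)\<^sup>2 = exp (- (2 * real n * Wn P Q n x))"
          by (simp add: power2_eq_square exp_add[symmetric])
        moreover have "- (2 * real n * Wn P Q n x) \<le> - (2 * real n * K)"
          using True assms by (simp add: mult_left_mono)
        ultimately show ?thesis using True by (simp add: ennreal_leI)
      qed simp
    qed
  qed
  also have "\<dots> = ennreal (exp (- (2 * real n * K)))" by (simp add: Qs.emeasure_space_1)
  finally show ?thesis .
qed

lemma piece3:
  assumes "n > 0" "F \<in> sets borel" "\<And>m v. (m, v) \<in> F \<Longrightarrow> a \<le> v"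
  shows "(\<integral>\<^sup>+ x. ennreal ((LR P Q n x)\<^sup>2) * indicator {x \<in> space (Q n). (M n x, Wn P Q n x) \<in> F} x \<partial>Q n)
     \<le> ennreal (exp (- (2 * real n * a))) * emeasure (Q n) {x \<in> space (Q n). (M n x, Wn P Q n x) \<in> F}"
proof -
  let ?S = "{x \<in> space (Q n). (M n x, Wn P Q n x) \<in> F}"
  have "(\<integral>\<^sup>+ x. ennreal ((LR P Q n x)\<^sup>2) * indicator ?S x \<partial>Q n)
     \<le> (\<integral>\<^sup>+ x. ennreal (exp (- (2 * real n * a))) * indicator ?S x \<partial>Q n)"
  proof (rule nn_integral_mono_AE)
    show "AE x in Q n. ennreal ((LR P Q n x)\<^sup>2) * indicator ?S x \<le> ennreal (exp (- (2 * real n * a))) * indicator ?S x"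
      using posAE[of n]
    proof eventually_elim
      case (elim x)
      show ?case
      proof (cases "x \<in> ?S")
        case True
        have "LR P Q n x = exp (- (real n * Wn P Q n x))" using L_exp assms elim by blast
        then have "(LR P Q n x)\<^sup>2 = exp (- (2 * real n * Wn P Q n x))"
          by (simp add: power2_eq_square exp_add[symmetric])
        moreover have "a \<le> Wn P Q n x" using True assms(3) by auto
        then have "- (2 * real n * Wn P Q n x) \<le> - (2 * real n * a)"
          using assms by (simp add: mult_left_mono)
        ultimately show ?thesis using True by (simp add: ennreal_leI)
      qed simp
    qed
  qed
  also have "\<dots> = ennreal (exp (- (2 * real n * a))) * emeasure (Q n) ?S"
    by (rule nn_integral_cmult_indicator) (rule Zset[OF assms(2)])
  finally show ?thesis .
qed

end


lemma ennreal_add3_le: "(a::ennreal) \<le> a + b + c" "b \<le> a + b + c" "c \<le> a + b + c"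
  by (simp_all add: add.assoc add_increasing2 add_increasing)

lemma floor_aux:
  fixes W K h :: real
  assumes "h > 0" "-K \<le> W" "W < K"
  defines "t \<equiv> (W + K) / h"
  shows "nat \<lfloor>t\<rfloor> < nat \<lceil>2 * K / h\<rceil>"
    "-K + real (nat \<lfloor>t\<rfloor>) * h \<le> W" "W \<le> -K + real (nat \<lfloor>t\<rfloor>) * h + h"
proof -
  have t0: "0 \<le> t" using assms unfolding t_def by auto
  have tlt: "t < 2 * K / h" using assms unfolding t_def by (simp add: divide_strict_right_mono)
  have fl: "real (nat \<lfloor>t\<rfloor>) = of_int \<lfloor>t\<rfloor>" using t0 by simp
  have "of_int \<lfloor>t\<rfloor> \<le> t" by simp
  also have "\<dots> < 2 * K / h" by (rule tlt)
  also have "\<dots> \<le> of_int \<lceil>2 * K / h\<rceil>" by simp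
  finally have "\<lfloor>t\<rfloor> < \<lceil>2 * K / h\<rceil>" by linarith
  then show "nat \<lfloor>t\<rfloor> < nat \<lceil>2 * K / h\<rceil>" using t0 by linarith
  have W: "W = -K + t * h" using assms unfolding t_def by simp
  show "-K + real (nat \<lfloor>t\<rfloor>) * h \<le> W" unfolding W fl
    using assms(1) by (intro add_left_mono mult_right_mono) auto
  have "t \<le> of_int \<lfloor>t\<rfloor> + 1" by linarith
  then have "t * h \<le> (of_int \<lfloor>t\<rfloor> + 1) * h" using assms(1) by (intro mult_right_mono) auto
  then show "W \<le> -K + real (nat \<lfloor>t\<rfloor>) * h + h" unfolding W fl by (simp add: algebra_simps)
qed

context sp begin

lemma upper_bound:
  assumes ldp: "LDP Q (\<lambda>n x. (M n x, Wn P Q n x)) J"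
    and Bb: "B \<in> sets borel" and dpos: "\<delta> > 0"
    and T: "eventually (\<lambda>n. (\<integral>\<^sup>+ x. ennreal ((LR P Q n x) powr (2 + \<delta>)) * indicator {x. M n x \<in> closure B} x \<partial>Q n)
              < ennreal (exp (real n * C))) sequentially"
    and A: "ereal A \<le> (INF z\<in>closure B \<times> UNIV. ereal (2 * snd z) + J z)"
    and c: "-A < c"
  shows "eventually (\<lambda>n. EQ B n < ennreal (exp (real n * c))) sequentially"
proof -
  have cB[measurable]: "closure B \<in> sets borel" by auto
  define \<epsilon> where "\<epsilon> = (c + A) / 4"
  have \<epsilon>: "\<epsilon> > 0" using c unfolding \<epsilon>_def by simp
  define h where "h = \<epsilon> / 2"
  have h: "h > 0" using \<epsilon> unfolding h_def by simp
  define K where "K = max 0 (max ((C + A) / \<delta>) (A / 2))"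
  have K0: "K \<ge> 0" unfolding K_def by simp
  have KC: "C - \<delta> * K \<le> -A"
  proof -
    have "(C + A) / \<delta> \<le> K" unfolding K_def by simp
    then have "C + A \<le> \<delta> * K" using dpos by (simp add: divide_le_eq mult.commute)
    then show ?thesis by simp
  qed
  have KA: "A \<le> 2 * K" unfolding K_def by linarith
  define N where "N = nat \<lceil>2 * K / h\<rceil>"
  define a where "a k = -K + real k * h" for k :: nat
  define F where "F k = closure B \<times> {a k .. a k + h}" for k
  have Fb: "F k \<in> sets borel" for k
    unfolding F_def by (intro borel_closed closed_Times) auto
  define S where "S n G = {x \<in> space (Q n). (M n x, Wn P Q n x) \<in> G}" for n G
  define U where "U n = exp (real n * (-A + 2 * \<epsilon>))" for n :: nat
  have mid: "eventually (\<lambda>n. emeasure (Q n) (S n (F k)) < ennreal (exp (real n * (2 * (a k + h) - A + \<epsilon>)))) sequentially" for k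
  proof -
    have clF: "closure (F k) = F k" unfolding F_def
      by (intro closure_closed closed_Times) auto
    have "ereal (A - 2 * (a k + h)) \<le> (INF z\<in>F k. J z)"
    proof (rule INF_greatest)
      fix z assume z: "z \<in> F k"
      then have "z \<in> closure B \<times> UNIV" unfolding F_def by auto
      then have "ereal A \<le> ereal (2 * snd z) + J z" using A by (meson INF_lower order_trans)
      moreover have "snd z \<le> a k + h" using z unfolding F_def by auto
      ultimately show "ereal (A - 2 * (a k + h)) \<le> J z"
        by (cases "J z") auto
    qed
    then have "- (INF z\<in>closure (F k). J z) < ereal (2 * (a k + h) - A + \<epsilon>)"
      unfolding clF using \<epsilon>
      by (metis (no_types, lifting) ereal_minus_le_minus ereal_uminus_le_reorder minus_diff_eq
          order_le_less_trans uminus_ereal.simps(1) less_add_same_cancel1 less_ereal.simps(1))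
    from LDP_upperE[OF ldp Fb this] show ?thesis unfolding S_def by simp
  qed
  have midall: "eventually (\<lambda>n. \<forall>k\<in>{..<N}. emeasure (Q n) (S n (F k)) < ennreal (exp (real n * (2 * (a k + h) - A + \<epsilon>)))) sequentially"
    by (rule eventually_ball_finite) (use mid in auto)
  have bigN: "eventually (\<lambda>n. real (N + 2) \<le> exp (real n * \<epsilon>)) sequentially"
    using eventually_ge_at_top[of "nat \<lceil>ln (real (N + 2)) / \<epsilon>\<rceil>"]
  proof eventually_elim
    case (elim n)
    then have "ln (real (N + 2)) / \<epsilon> \<le> real n" by linarith
    then have "ln (real (N + 2)) \<le> real n * \<epsilon>" using \<epsilon> by (simp add: divide_le_eq)
    then show ?case by (metis exp_le_cancel_iff exp_ln of_nat_0_less_iff zero_less_Suc add_2_eq_Suc')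
  qed
  show ?thesis using T midall bigN eventually_gt_at_top[of 0]
  proof eventually_elim
    case (elim n)
    define f1 where "f1 x = ennreal ((LR P Q n x)\<^sup>2) * indicator {x \<in> space (Q n). M n x \<in> closure B \<and> Wn P Q n x < -K} x" for x
    define f2 where "f2 x = ennreal ((LR P Q n x)\<^sup>2) * indicator {x \<in> space (Q n). K \<le> Wn P Q n x} x" for x
    define f3 where "f3 k x = ennreal ((LR P Q n x)\<^sup>2) * indicator (S n (F k)) x" for k x
    have m1: "f1 \<in> borel_measurable (Q n)" unfolding f1_def by measurable
    have m2: "f2 \<in> borel_measurable (Q n)" unfolding f2_def by measurable
    have m3: "f3 k \<in> borel_measurable (Q n)" for k
      unfolding f3_def S_def using Zset[OF Fb] by measurable
    have "EQ B n \<le> (\<integral>\<^sup>+ x. f1 x + f2 x + (\<Sum>k\<in>{..<N}. f3 k x) \<partial>Q n)"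
      unfolding EQ_def
    proof (rule nn_integral_mono)
      fix x assume x: "x \<in> space (Q n)"
      show "ennreal ((LR P Q n x)\<^sup>2) * indicator {x. M n x \<in> B} x \<le> f1 x + f2 x + (\<Sum>k\<in>{..<N}. f3 k x)"
      proof (cases "M n x \<in> B")
        case False then show ?thesis by simp
      next
        case True
        then have cl: "M n x \<in> closure B" using closure_subset by auto
        consider "Wn P Q n x < -K" | "K \<le> Wn P Q n x" | "-K \<le> Wn P Q n x" "Wn P Q n x < K" by linarith
        then show ?thesis
        proof cases
          case 1
          then have "ennreal ((LR P Q n x)\<^sup>2) * indicator {x. M n x \<in> B} x = f1 x"
            unfolding f1_def using True cl x by simp
          then show ?thesis using ennreal_add3_le(1) by metis
        next
          case 2
          then have "ennreal ((LR P Q n x)\<^sup>2) * indicator {x. M n x \<in> B} x = f2 x"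
            unfolding f2_def using True cl x by simp
          then show ?thesis using ennreal_add3_le(2) by metis
        next
          case 3
          define k where "k = nat \<lfloor>(Wn P Q n x + K) / h\<rfloor>"
          note fa = floor_aux[OF h 3]
          have kN: "k < N" using fa(1) unfolding k_def N_def .
          have "(M n x, Wn P Q n x) \<in> F k" unfolding F_def a_def k_def using cl fa(2,3) by auto
          then have "ennreal ((LR P Q n x)\<^sup>2) * indicator {x. M n x \<in> B} x = f3 k x"
            unfolding f3_def S_def using True x by simp
          also have "\<dots> \<le> (\<Sum>k\<in>{..<N}. f3 k x)"
            by (rule member_le_sum) (use kN in auto)
          finally show ?thesis using ennreal_add3_le(3) order_trans by metis
        qed
      qed
    qed
    also have "\<dots> = integral\<^sup>N (Q n) f1 + integral\<^sup>N (Q n) f2 + (\<Sum>k\<in>{..<N}. integral\<^sup>N (Q n) (f3 k))"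
      using m1 m2 m3 by (simp add: nn_integral_add nn_integral_sum)
    also have "\<dots> \<le> ennreal (U n) + ennreal (U n) + of_nat N * ennreal (U n)"
    proof (intro add_mono)
      have "integral\<^sup>N (Q n) f1 \<le> ennreal (exp (- (real n * \<delta> * K))) * (\<integral>\<^sup>+ x. ennreal ((LR P Q n x) powr (2 + \<delta>)) * indicator {x. M n x \<in> closure B} x \<partial>Q n)"
        unfolding f1_def by (rule piece1[OF elim(4) K0 dpos Bb])
      also have "\<dots> \<le> ennreal (exp (- (real n * \<delta> * K))) * ennreal (exp (real n * C))"
        using elim(1) by (intro mult_left_mono) auto
      also have "\<dots> = ennreal (exp (real n * (C - \<delta> * K)))"
        by (simp add: ennreal_mult[symmetric] exp_add[symmetric] algebra_simps)
      also have "\<dots> \<le> ennreal (U n)" unfolding U_def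
        using KC \<epsilon> by (intro ennreal_leI) (auto intro!: mult_left_mono)
      finally show "integral\<^sup>N (Q n) f1 \<le> ennreal (U n)" .
      have "integral\<^sup>N (Q n) f2 \<le> ennreal (exp (- (2 * real n * K)))"
        unfolding f2_def by (rule piece2[OF elim(4)])
      also have "\<dots> \<le> ennreal (U n)" unfolding U_def
      proof (intro ennreal_leI, simp)
        have "- (2 * K) \<le> -A + 2 * \<epsilon>" using KA \<epsilon> by simp
        then have "real n * (- (2 * K)) \<le> real n * (-A + 2 * \<epsilon>)" by (rule mult_left_mono) auto
        then show "- (2 * real n * K) \<le> real n * (2 * \<epsilon> - A)" by (simp add: algebra_simps)
      qed
      finally show "integral\<^sup>N (Q n) f2 \<le> ennreal (U n)" .
      have "(\<Sum>k\<in>{..<N}. integral\<^sup>N (Q n) (f3 k)) \<le> of_nat (card {..<N}) * ennreal (U n)"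
      proof (rule sum_bounded_above)
        fix k assume k: "k \<in> {..<N}"
        have "integral\<^sup>N (Q n) (f3 k) \<le> ennreal (exp (- (2 * real n * a k))) * emeasure (Q n) (S n (F k))"
          unfolding f3_def S_def by (rule piece3[OF elim(4) Fb]) (auto simp: F_def)
        also have "\<dots> \<le> ennreal (exp (- (2 * real n * a k))) * ennreal (exp (real n * (2 * (a k + h) - A + \<epsilon>)))"
          using elim(2) k by (intro mult_left_mono) (auto intro: less_imp_le)
        also have "\<dots> = ennreal (U n)" unfolding U_def h_def
          by (simp add: ennreal_mult[symmetric] exp_add[symmetric] algebra_simps)
        finally show "integral\<^sup>N (Q n) (f3 k) \<le> ennreal (U n)" .
      qed
      then show "(\<Sum>k\<in>{..<N}. integral\<^sup>N (Q n) (f3 k)) \<le> of_nat N * ennreal (U n)" by simp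
    qed
    also have "\<dots> = ennreal (real (N + 2) * U n)"
      by (simp add: ennreal_mult[symmetric] ennreal_of_nat_eq_real_of_nat[symmetric] algebra_simps U_def)
         (simp add: ennreal_mult ennreal_of_nat_eq_real_of_nat distrib_right ennreal_plus[symmetric] del: ennreal_plus)
    also have "\<dots> \<le> ennreal (exp (real n * \<epsilon>) * U n)"
      using elim(3) by (intro ennreal_leI mult_right_mono) (auto simp: U_def)
    also have "\<dots> < ennreal (exp (real n * c))"
    proof -
      have "exp (real n * \<epsilon>) * U n = exp (real n * (-A + 3 * \<epsilon>))" unfolding U_def
        by (simp add: exp_add[symmetric] algebra_simps)
      also have "\<dots> < exp (real n * c)"
      proof -
        have "-A + 3 * \<epsilon> < c" using \<epsilon> unfolding \<epsilon>_def by (simp add: field_simps)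
        then show ?thesis using elim(4) by (intro exp_less_mono mult_strict_left_mono) auto
      qed
      finally show ?thesis by (simp add: ennreal_lessI)
    qed
    finally show ?case .
  qed
qed

end


lemma lsc_ball:
  assumes "lower_semicont f" "ereal a < f z"
  obtains d where "d > 0" "\<And>y. dist y z < d \<Longrightarrow> ereal a < f y"
proof -
  have "eventually (\<lambda>y. ereal a < f y) (nhds z)" using assms unfolding lower_semicont_def by blast
  then obtain d where "d > 0" "\<And>y. dist y z < d \<Longrightarrow> ereal a < f y"
    unfolding eventually_nhds_metric by blast
  then show ?thesis using that by blast
qed

context sp begin

lemma ball_bounds:
  fixes m :: 'm and w r :: real
  assumes "n > 0"
  defines "S \<equiv> {x \<in> space (Q n). (M n x, Wn P Q n x) \<in> ball (m, w) r}"
  shows "ennreal (exp (- (real n * (w + r)))) * emeasure (Q n) S \<le> emeasure (P n) S"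
    "emeasure (P n) S \<le> ennreal (exp (- (real n * (w - r)))) * emeasure (Q n) S"
proof -
  have Sm: "S \<in> sets (Q n)" unfolding S_def by (rule Zset) auto
  have PS: "emeasure (P n) S = (\<integral>\<^sup>+ x. ennreal (LR P Q n x) * indicator S x \<partial>Q n)"
    by (rule dens_set[OF Sm])
  have Wx: "w - r < Wn P Q n x \<and> Wn P Q n x < w + r" if "x \<in> S" for x
  proof -
    have "dist (M n x, Wn P Q n x) (m, w) < r" using that unfolding S_def by (auto simp: dist_commute)
    then have "dist (Wn P Q n x) w < r" using dist_snd_le[of "(M n x, Wn P Q n x)" "(m, w)"] by simp
    then show ?thesis by (auto simp: dist_real_def abs_less_iff)
  qed
  have "ennreal (exp (- (real n * (w + r)))) * emeasure (Q n) S = (\<integral>\<^sup>+ x. ennreal (exp (- (real n * (w + r)))) * indicator S x \<partial>Q n)"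
    by (rule nn_integral_cmult_indicator[symmetric, OF Sm])
  also have "\<dots> \<le> (\<integral>\<^sup>+ x. ennreal (LR P Q n x) * indicator S x \<partial>Q n)"
  proof (rule nn_integral_mono_AE)
    show "AE x in Q n. ennreal (exp (- (real n * (w + r)))) * indicator S x \<le> ennreal (LR P Q n x) * indicator S x"
      using posAE[of n]
    proof eventually_elim
      case (elim x)
      show ?case
      proof (cases "x \<in> S")
        case True
        have "LR P Q n x = exp (- (real n * Wn P Q n x))" using L_exp assms elim by blast
        moreover have "real n * Wn P Q n x \<le> real n * (w + r)" using Wx[OF True] by (intro mult_left_mono) auto
        ultimately show ?thesis using True by (simp add: ennreal_leI)
      qed simp
    qed
  qed
  finally show "ennreal (exp (- (real n * (w + r)))) * emeasure (Q n) S \<le> emeasure (P n) S" using PS by simp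
  have "(\<integral>\<^sup>+ x. ennreal (LR P Q n x) * indicator S x \<partial>Q n) \<le> (\<integral>\<^sup>+ x. ennreal (exp (- (real n * (w - r)))) * indicator S x \<partial>Q n)"
  proof (rule nn_integral_mono_AE)
    show "AE x in Q n. ennreal (LR P Q n x) * indicator S x \<le> ennreal (exp (- (real n * (w - r)))) * indicator S x"
      using posAE[of n]
    proof eventually_elim
      case (elim x)
      show ?case
      proof (cases "x \<in> S")
        case True
        have "LR P Q n x = exp (- (real n * Wn P Q n x))" using L_exp assms elim by blast
        moreover have "real n * (w - r) \<le> real n * Wn P Q n x" using Wx[OF True] by (intro mult_left_mono) auto
        ultimately show ?thesis using True by (simp add: ennreal_leI)
      qed simp
    qed
  qed
  also have "\<dots> = ennreal (exp (- (real n * (w - r)))) * emeasure (Q n) S"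
    by (rule nn_integral_cmult_indicator[OF Sm])
  finally show "emeasure (P n) S \<le> ennreal (exp (- (real n * (w - r)))) * emeasure (Q n) S" using PS by simp
qed

lemma ident:
  assumes ldpP: "LDP P (\<lambda>n x. (M n x, Wn P Q n x)) JP" and rP: "rate_function JP"
    and ldpQ: "LDP Q (\<lambda>n x. (M n x, Wn P Q n x)) JQ" and rQ: "rate_function JQ"
  shows "JP (m, w) = ereal w + JQ (m, w)"
proof (rule antisym)
  define S where "S n G = {x \<in> space (Q n). (M n x, Wn P Q n x) \<in> G}" for n G
  have SP: "{x \<in> space (P n). (M n x, Wn P Q n x) \<in> G} = S n G" for n G
    unfolding S_def space_PQ ..
  show "ereal w + JQ (m, w) \<le> JP (m, w)"
  proof (rule ccontr)
    assume "\<not> ?thesis"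
    then have lt: "JP (m, w) < ereal w + JQ (m, w)" by simp
    have "0 \<le> JP (m,w)" using rP unfolding rate_function_def by blast
    with lt obtain p where p: "JP (m,w) = ereal p" by (cases "JP (m,w)") auto
    have "ereal (p - w) < JQ (m, w)" using lt p by (cases "JQ (m,w)") auto
    then obtain a where a: "ereal (p - w) < ereal a" "ereal a < JQ (m, w)" using ereal_dense2 by blast
    obtain d where d: "d > 0" "\<And>y. dist y (m,w) < d \<Longrightarrow> ereal a < JQ y"
      using lsc_ball[of JQ a "(m,w)"] a(2) rQ unfolding rate_function_def by blast
    define r where "r = min ((a - (p - w)) / 4) (d / 2)"
    have r: "r > 0" "p - w + 3 * r < a" "r < d"
    proof -
      have "r \<le> (a - (p - w)) / 4" unfolding r_def by (rule min.cobounded1)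
      then show "p - w + 3 * r < a" using a(1) by simp
    qed (use a(1) d(1) in \<open>simp_all add: r_def\<close>)
    define G where "G = ball (m, w) r"
    have Gb: "G \<in> sets borel" unfolding G_def by auto
    have "(INF x\<in>interior G. JP x) \<le> JP (m,w)"
      unfolding G_def interior_open[OF open_ball] using r(1) by (intro INF_lower) auto
    then have "- JP (m,w) \<le> - (INF x\<in>interior G. JP x)" by simp
    moreover have "ereal (-p - r) < - JP (m,w)" using p r(1) by simp
    ultimately have "ereal (-p - r) < - (INF x\<in>interior G. JP x)" by (rule order_less_le_trans[rotated])
    from LDP_lowerE[OF ldpP Gb this] have ev1:
      "eventually (\<lambda>n. ennreal (exp (real n * (-p - r))) < emeasure (P n) (S n G)) sequentially"
      unfolding SP .
    have "ereal a \<le> (INF x\<in>closure G. JQ x)"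
    proof (rule INF_greatest)
      fix y assume "y \<in> closure G"
      then have "dist y (m,w) \<le> r" unfolding G_def using closure_minimal[OF ball_subset_cball closed_cball, of "(m,w)" r] by (auto simp: dist_commute)
      then show "ereal a \<le> JQ y" using d(2)[of y] r(3) by (simp add: less_imp_le)
    qed
    then have "- (INF x\<in>closure G. JQ x) \<le> ereal (-a)"
      by (subst uminus_ereal.simps(1)[symmetric]) (simp only: ereal_minus_le_minus)
    moreover have "ereal (-a) < ereal (-a + r)" using r(1) by simp
    ultimately have "- (INF x\<in>closure G. JQ x) < ereal (-a + r)" by (rule order_le_less_trans)
    from LDP_upperE[OF ldpQ Gb this] have ev2:
      "eventually (\<lambda>n. emeasure (Q n) (S n G) < ennreal (exp (real n * (-a + r)))) sequentially"
      unfolding S_def .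
    obtain n where n: "n > 0" "ennreal (exp (real n * (-p - r))) < emeasure (P n) (S n G)"
      "emeasure (Q n) (S n G) < ennreal (exp (real n * (-a + r)))"
      using eventually_happens'[OF _ eventually_conj[OF eventually_gt_at_top[of 0] eventually_conj[OF ev1 ev2]]]
      by auto
    have "emeasure (P n) (S n G) \<le> ennreal (exp (- (real n * (w - r)))) * emeasure (Q n) (S n G)"
      using ball_bounds(2)[OF n(1), of m w r] unfolding S_def G_def .
    also have "\<dots> \<le> ennreal (exp (- (real n * (w - r)))) * ennreal (exp (real n * (-a + r)))"
      using n(3) by (intro mult_left_mono) auto
    also have "\<dots> = ennreal (exp (real n * (-w - a + 2 * r)))"
      by (simp add: ennreal_mult[symmetric] exp_add[symmetric] algebra_simps)
    finally have "ennreal (exp (real n * (-p - r))) < ennreal (exp (real n * (-w - a + 2 * r)))"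
      by (rule order_less_le_trans[OF n(2)])
    then have "exp (real n * (-p - r)) < exp (real n * (-w - a + 2 * r))" by (simp add: ennreal_less_iff)
    then have "real n * (-p - r) < real n * (-w - a + 2 * r)" by simp
    then have "-p - r < -w - a + 2 * r" using n(1) by (simp add: mult_less_cancel_left)
    then show False using r(2) by linarith
  qed
  show "JP (m, w) \<le> ereal w + JQ (m, w)"
  proof (rule ccontr)
    assume "\<not> ?thesis"
    then have lt: "ereal w + JQ (m, w) < JP (m, w)" by simp
    have "0 \<le> JQ (m,w)" using rQ unfolding rate_function_def by blast
    with lt obtain q where q: "JQ (m,w) = ereal q" by (cases "JQ (m,w)") auto
    have "ereal (q + w) < JP (m, w)" using lt q by (simp add: add.commute)
    then obtain a where a: "ereal (q + w) < ereal a" "ereal a < JP (m, w)" using ereal_dense2 by blast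
    obtain d where d: "d > 0" "\<And>y. dist y (m,w) < d \<Longrightarrow> ereal a < JP y"
      using lsc_ball[of JP a "(m,w)"] a(2) rP unfolding rate_function_def by blast
    define r where "r = min ((a - (q + w)) / 4) (d / 2)"
    have r: "r > 0" "q + w + 3 * r < a" "r < d"
    proof -
      have "r \<le> (a - (q + w)) / 4" unfolding r_def by (rule min.cobounded1)
      then show "q + w + 3 * r < a" using a(1) by simp
    qed (use a(1) d(1) in \<open>simp_all add: r_def\<close>)
    define G where "G = ball (m, w) r"
    have Gb: "G \<in> sets borel" unfolding G_def by auto
    have "(INF x\<in>interior G. JQ x) \<le> JQ (m,w)"
      unfolding G_def interior_open[OF open_ball] using r(1) by (intro INF_lower) auto
    then have "- JQ (m,w) \<le> - (INF x\<in>interior G. JQ x)" by simp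
    moreover have "ereal (-q - r) < - JQ (m,w)" using q r(1) by simp
    ultimately have "ereal (-q - r) < - (INF x\<in>interior G. JQ x)" by (rule order_less_le_trans[rotated])
    from LDP_lowerE[OF ldpQ Gb this] have ev1:
      "eventually (\<lambda>n. ennreal (exp (real n * (-q - r))) < emeasure (Q n) (S n G)) sequentially"
      unfolding S_def .
    have "ereal a \<le> (INF x\<in>closure G. JP x)"
    proof (rule INF_greatest)
      fix y assume "y \<in> closure G"
      then have "dist y (m,w) \<le> r" unfolding G_def using closure_minimal[OF ball_subset_cball closed_cball, of "(m,w)" r] by (auto simp: dist_commute)
      then show "ereal a \<le> JP y" using d(2)[of y] r(3) by (simp add: less_imp_le)
    qed
    then have "- (INF x\<in>closure G. JP x) \<le> ereal (-a)"
      by (subst uminus_ereal.simps(1)[symmetric]) (simp only: ereal_minus_le_minus)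
    moreover have "ereal (-a) < ereal (-a + r)" using r(1) by simp
    ultimately have "- (INF x\<in>closure G. JP x) < ereal (-a + r)" by (rule order_le_less_trans)
    from LDP_upperE[OF ldpP Gb this] have ev2:
      "eventually (\<lambda>n. emeasure (P n) (S n G) < ennreal (exp (real n * (-a + r)))) sequentially"
      unfolding SP .
    obtain n where n: "n > 0" "ennreal (exp (real n * (-q - r))) < emeasure (Q n) (S n G)"
      "emeasure (P n) (S n G) < ennreal (exp (real n * (-a + r)))"
      using eventually_happens'[OF _ eventually_conj[OF eventually_gt_at_top[of 0] eventually_conj[OF ev1 ev2]]]
      by auto
    have "ennreal (exp (real n * (-w - q - 2 * r))) = ennreal (exp (- (real n * (w + r)))) * ennreal (exp (real n * (-q - r)))"
      by (simp add: ennreal_mult[symmetric] exp_add[symmetric] algebra_simps)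
    also have "\<dots> \<le> ennreal (exp (- (real n * (w + r)))) * emeasure (Q n) (S n G)"
      using n(2) by (intro mult_left_mono) auto
    also have "\<dots> \<le> emeasure (P n) (S n G)"
      using ball_bounds(1)[OF n(1), of w r m] unfolding S_def G_def .
    finally have "ennreal (exp (real n * (-w - q - 2 * r))) < ennreal (exp (real n * (-a + r)))"
      by (rule order_le_less_trans[OF _ n(3)])
    then have "exp (real n * (-w - q - 2 * r)) < exp (real n * (-a + r))" by (simp add: ennreal_less_iff)
    then have "real n * (-w - q - 2 * r) < real n * (-a + r)" by simp
    then have "-w - q - 2 * r < -a + r" using n(1) by (simp add: mult_less_cancel_left)
    then show False using r(2) by linarith
  qed
qed

end


context sp begin

lemma fin_above:
  assumes Bb: "B \<in> sets borel"
    and lim: "(\<lambda>n. - nlog n (emeasure (P n) {x \<in> space (P n). M n x \<in> B})) \<longlonglongrightarrow> ereal i"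
  shows "eventually (\<lambda>n. ennreal (exp (real n * (- (2 * i + 4)))) < EQ B n) sequentially"
proof -
  note Bb[measurable]
  have "eventually (\<lambda>n. - nlog n (emeasure (P n) {x \<in> space (P n). M n x \<in> B}) < ereal (i + 1)) sequentially"
    using lim by (rule order_tendstoD(2)) simp
  then have ev: "eventually (\<lambda>n. ennreal (exp (real n * (- (i + 1)))) < emeasure (P n) {x \<in> space (P n). M n x \<in> B}) sequentially"
    using eventually_gt_at_top[of 0]
  proof eventually_elim
    case (elim n)
    then have "ereal (- (i + 1)) < nlog n (emeasure (P n) {x \<in> space (P n). M n x \<in> B})"
      by (metis ereal_uminus_less_reorder uminus_ereal.simps(1))
    then show ?case using elim(2) by (simp add: less_nlog_iff)
  qed
  show ?thesis using ev eventually_gt_at_top[of 0]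
  proof eventually_elim
    case (elim n)
    interpret Qs: prob_space "Q n" by (rule prob_Q)
    define t where "t = exp (- (real n * (i + 2)))"
    have t: "t > 0" unfolding t_def by simp
    define A1 where "A1 = {x \<in> space (Q n). M n x \<in> B \<and> t \<le> LR P Q n x}"
    define A2 where "A2 = {x \<in> space (Q n). M n x \<in> B \<and> LR P Q n x < t}"
    have A1m: "A1 \<in> sets (Q n)" unfolding A1_def by measurable
    have A2m: "A2 \<in> sets (Q n)" unfolding A2_def by measurable
    have SB: "{x \<in> space (P n). M n x \<in> B} = A1 \<union> A2" unfolding A1_def A2_def space_PQ by auto
    have "emeasure (P n) A2 = (\<integral>\<^sup>+ x. ennreal (LR P Q n x) * indicator A2 x \<partial>Q n)" by (rule dens_set[OF A2m])
    also have "\<dots> \<le> (\<integral>\<^sup>+ x. ennreal t \<partial>Q n)"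
      by (rule nn_integral_mono) (auto simp: A2_def indicator_def ennreal_leI less_imp_le)
    also have "\<dots> = ennreal t" by (simp add: Qs.emeasure_space_1)
    finally have P2: "emeasure (P n) A2 \<le> ennreal t" .
    have mB: "(\<lambda>x. ennreal ((LR P Q n x)\<^sup>2) * indicator {x. M n x \<in> B} x) \<in> borel_measurable (Q n)"
    proof -
      have "(\<lambda>x. indicator {x. M n x \<in> B} x :: ennreal) = (\<lambda>x. indicator B (M n x))"
        by (auto simp: indicator_def)
      then have "(\<lambda>x. indicator {x. M n x \<in> B} x :: ennreal) \<in> borel_measurable (Q n)" using Bb by simp
      then show ?thesis by measurable
    qed
    have "emeasure (P n) A1 = (\<integral>\<^sup>+ x. ennreal (LR P Q n x) * indicator A1 x \<partial>Q n)" by (rule dens_set[OF A1m])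
    also have "\<dots> \<le> (\<integral>\<^sup>+ x. ennreal (1 / t) * (ennreal ((LR P Q n x)\<^sup>2) * indicator {x. M n x \<in> B} x) \<partial>Q n)"
    proof (rule nn_integral_mono)
      fix x assume "x \<in> space (Q n)"
      show "ennreal (LR P Q n x) * indicator A1 x \<le> ennreal (1 / t) * (ennreal ((LR P Q n x)\<^sup>2) * indicator {x. M n x \<in> B} x)"
      proof (cases "x \<in> A1")
        case True
        then have "t \<le> LR P Q n x" "M n x \<in> B" unfolding A1_def by auto
        then have "LR P Q n x * t \<le> LR P Q n x * LR P Q n x" using L_nonneg by (intro mult_left_mono) auto
        then have "LR P Q n x \<le> 1 / t * (LR P Q n x)\<^sup>2" using t by (simp add: field_simps power2_eq_square)
        then show ?thesis using True \<open>M n x \<in> B\<close> t by (simp add: ennreal_mult[symmetric] ennreal_leI)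
      qed simp
    qed
    also have "\<dots> = ennreal (1 / t) * EQ B n" unfolding EQ_def by (rule nn_integral_cmult[OF mB])
    finally have P1: "emeasure (P n) A1 \<le> ennreal (1 / t) * EQ B n" .
    show ?case
    proof (rule ccontr)
      assume "\<not> ?case"
      then have X: "EQ B n \<le> ennreal (exp (real n * (- (2 * i + 4))))" by simp
      have "ennreal (exp (real n * (- (i + 1)))) < emeasure (P n) (A1 \<union> A2)" using elim(1) SB by simp
      also have "\<dots> \<le> emeasure (P n) A1 + emeasure (P n) A2"
        by (rule emeasure_subadditive) (use A1m A2m sets_PQ in auto)
      also have "\<dots> \<le> ennreal (1 / t) * ennreal (exp (real n * (- (2 * i + 4)))) + ennreal t"
        using P1 P2 X by (intro add_mono order_trans[OF P1] mult_left_mono) auto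
      also have "\<dots> = ennreal (2 * exp (real n * (- (i + 2))))"
      proof -
        have e1: "1 / t = exp (real n * (i + 2))" unfolding t_def by (simp only: exp_minus divide_inverse inverse_inverse_eq mult_1)
        have e2: "exp (real n * (i + 2)) * exp (real n * (- (2 * i + 4))) = t"
          unfolding t_def by (simp add: exp_add[symmetric] algebra_simps)
        have "ennreal (1 / t) * ennreal (exp (real n * (- (2 * i + 4)))) + ennreal t = ennreal t + ennreal t"
          using e1 e2 t by (simp add: ennreal_mult[symmetric])
        also have "\<dots> = ennreal (2 * t)" using t by (simp add: ennreal_plus[symmetric] del: ennreal_plus)
        finally show ?thesis unfolding t_def by (simp add: algebra_simps)
      qed
      finally have "exp (real n * (- (i + 1))) < 2 * exp (real n * (- (i + 2)))"
        by (simp add: ennreal_less_iff)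
      moreover have "exp (real n * (- (i + 1))) = exp (real n) * exp (real n * (- (i + 2)))"
        by (simp add: exp_add[symmetric] algebra_simps)
      moreover have "2 \<le> exp (real n)"
      proof -
        have "2 \<le> 1 + real n" using elim(2) by simp
        also have "\<dots> \<le> exp (real n)" by (rule exp_ge_add_one_self)
        finally show ?thesis .
      qed
      ultimately show False by (simp add: mult_right_mono)
    qed
  qed
qed

end


context sp begin
lemma EQ_le_T:
  assumes "\<delta> > 0" "B \<in> sets borel"
  shows "EQ B n \<le> 1 + (\<integral>\<^sup>+ x. ennreal ((LR P Q n x) powr (2 + \<delta>)) * indicator {x. M n x \<in> closure B} x \<partial>Q n)"
proof -
  interpret Qs: prob_space "Q n" by (rule prob_Q)
  note assms(2)[measurable]
  have cB[measurable]: "closure B \<in> sets borel" by auto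
  have mT: "(\<lambda>x. ennreal ((LR P Q n x) powr (2 + \<delta>)) * indicator {x. M n x \<in> closure B} x) \<in> borel_measurable (Q n)"
  proof -
    have "(\<lambda>x. indicator {x. M n x \<in> closure B} x :: ennreal) = (\<lambda>x. indicator (closure B) (M n x))"
      by (auto simp: indicator_def)
    then have "(\<lambda>x. indicator {x. M n x \<in> closure B} x :: ennreal) \<in> borel_measurable (Q n)" by simp
    then show ?thesis by measurable
  qed
  have "EQ B n \<le> (\<integral>\<^sup>+ x. 1 + ennreal ((LR P Q n x) powr (2 + \<delta>)) * indicator {x. M n x \<in> closure B} x \<partial>Q n)"
    unfolding EQ_def
  proof (rule nn_integral_mono)
    fix x assume x: "x \<in> space (Q n)"
    let ?L = "LR P Q n x"
    show "ennreal (?L\<^sup>2) * indicator {x. M n x \<in> B} x \<le> 1 + ennreal (?L powr (2 + \<delta>)) * indicator {x. M n x \<in> closure B} x"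
    proof (cases "M n x \<in> B")
      case True
      then have cl: "M n x \<in> closure B" using closure_subset by auto
      have "?L\<^sup>2 \<le> 1 + ?L powr (2 + \<delta>)"
      proof (cases "?L \<le> 1")
        case True
        then have "?L\<^sup>2 \<le> 1" using L_nonneg by (simp add: power_le_one)
        then show ?thesis by (smt (verit) powr_ge_zero)
      next
        case False
        then have "?L powr 2 \<le> ?L powr (2 + \<delta>)" using assms(1) by (intro powr_mono) auto
        moreover have "?L powr 2 = ?L\<^sup>2" using False by (simp add: powr_realpow)
        ultimately show ?thesis by simp
      qed
      moreover have "ennreal (1 + ?L powr (2 + \<delta>)) = 1 + ennreal (?L powr (2 + \<delta>))"
        using ennreal_plus[of 1 "?L powr (2 + \<delta>)"] by simp
      ultimately have "ennreal (?L\<^sup>2) \<le> 1 + ennreal (?L powr (2 + \<delta>))"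
        by (metis ennreal_leI)
      then show ?thesis using True cl by simp
    qed simp
  qed
  also have "\<dots> = 1 + (\<integral>\<^sup>+ x. ennreal ((LR P Q n x) powr (2 + \<delta>)) * indicator {x. M n x \<in> closure B} x \<partial>Q n)"
    using mT by (simp add: nn_integral_add Qs.emeasure_space_1)
  finally show ?thesis .
qed
end

theorem lemma1:
  fixes P Q :: "nat \<Rightarrow> (nat \<Rightarrow> 'e::euclidean_space) measure"
    and M :: "nat \<Rightarrow> (nat \<Rightarrow> 'e) \<Rightarrow> 'm::euclidean_space"
    and B :: "'m set"
    and I_P :: "'m \<Rightarrow> ereal"
    and J_P J_Q :: "'m \<times> real \<Rightarrow> ereal"
  assumes sets_P: "\<And>n. sets (P n) = sets (\<Pi>\<^sub>M i\<in>{..<n}. (borel :: 'e measure))"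
    and sets_Q: "\<And>n. sets (Q n) = sets (\<Pi>\<^sub>M i\<in>{..<n}. (borel :: 'e measure))"
    and prob_P: "\<And>n. prob_space (P n)"
    and prob_Q: "\<And>n. prob_space (Q n)"
    and ac_PQ: "\<And>n. absolutely_continuous (Q n) (P n)"
    and ac_QP: "\<And>n. absolutely_continuous (P n) (Q n)"
    and M_meas: "\<And>n. M n \<in> borel_measurable (\<Pi>\<^sub>M i\<in>{..<n}. (borel :: 'e measure))"
    and B_meas: "B \<in> sets borel"
    \<comment> \<open>Assumption 1\<close>
    and A1_ldp: "LDP P M I_P"
    and A1_good: "good_rate_function I_P"
    and A1_fin: "(INF m\<in>B. I_P m) < \<infinity>"
    and A1_lim: "(\<lambda>n. - nlog n (emeasure (P n) {x \<in> space (P n). M n x \<in> B}))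
                   \<longlonglongrightarrow> (INF m\<in>B. I_P m)"
    \<comment> \<open>Assumption 2\<close>
    and A2: "\<exists>\<delta>>0. limsup (\<lambda>n. nlog n (\<integral>\<^sup>+ x. ennreal ((LR P Q n x) powr (2 + \<delta>))
                 * indicator {x. M n x \<in> closure B} x \<partial>(Q n))) < \<infinity>"
    \<comment> \<open>Assumption 3\<close>
    and A3a: "LDP P (\<lambda>n x. (M n x, Wn P Q n x)) J_P" "good_rate_function J_P"
    and A3b: "LDP Q (\<lambda>n x. (M n x, Wn P Q n x)) J_Q" "good_rate_function J_Q"
    and A3c: "{z. J_P z < \<infinity>} = {z. J_Q z < \<infinity>}" "{z. J_P z < \<infinity>} \<noteq> {}"
    and A3d: "(INF z\<in>B \<times> UNIV. ereal (2 * snd z) + J_Q z)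
                = (INF z\<in>interior B \<times> UNIV. ereal (2 * snd z) + J_Q z)"
             "(INF z\<in>B \<times> UNIV. ereal (2 * snd z) + J_Q z)
                = (INF z\<in>closure B \<times> UNIV. ereal (2 * snd z) + J_Q z)"
  shows "\<exists>R::real.
           (\<lambda>n. - nlog n (\<integral>\<^sup>+ x. ennreal ((LR P Q n x)\<^sup>2) * indicator {x. M n x \<in> B} x \<partial>(Q n)))
              \<longlonglongrightarrow> ereal R
         \<and> ereal R = (INF z\<in>B \<times> UNIV. ereal (snd z) + J_P z)
         \<and> ereal R = (INF z\<in>B \<times> UNIV. ereal (2 * snd z) + J_Q z)"
proof -
  interpret sp P Q M
    by (rule sp.intro[OF sets_P sets_Q prob_P prob_Q ac_PQ ac_QP M_meas])
  have rP: "rate_function J_P" and rQ: "rate_function J_Q"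
    using A3a(2) A3b(2) unfolding good_rate_function_def by auto
  have JQnn: "\<And>z. 0 \<le> J_Q z" using rQ unfolding rate_function_def by auto
  define I where "I = (INF z\<in>B \<times> UNIV. ereal (2 * snd z) + J_Q z)"
  note lower = lower_bound[OF A3b(1) JQnn, of _ B, folded A3d(1) I_def]
  note upper = upper_bound[OF A3b(1) B_meas, folded A3d(2) I_def]
  obtain \<delta> where \<delta>: "\<delta> > 0" and ls: "limsup (\<lambda>n. nlog n (\<integral>\<^sup>+ x. ennreal ((LR P Q n x) powr (2 + \<delta>))
                 * indicator {x. M n x \<in> closure B} x \<partial>(Q n))) < \<infinity>" using A2 by blast
  from ereal_dense2[OF ls] obtain C where "limsup (\<lambda>n. nlog n (\<integral>\<^sup>+ x. ennreal ((LR P Q n x) powr (2 + \<delta>))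
                 * indicator {x. M n x \<in> closure B} x \<partial>(Q n))) < ereal C" by blast
  from Limsup_lessD[OF this] have T: "eventually (\<lambda>n. (\<integral>\<^sup>+ x. ennreal ((LR P Q n x) powr (2 + \<delta>))
                 * indicator {x. M n x \<in> closure B} x \<partial>(Q n)) < ennreal (exp (real n * C))) sequentially"
    using eventually_gt_at_top[of 0] by eventually_elim (simp add: nlog_less_iff)
  note upper' = upper[OF \<delta> T]
  have Inm: "I \<noteq> -\<infinity>"
  proof
    assume Im: "I = -\<infinity>"
    define c where "c = max C 0 + 1"
    have "eventually (\<lambda>n. ennreal (exp (real n * c)) < EQ B n) sequentially"
      by (rule lower) (simp add: Im)
    then obtain n where n: "n > 0" "ennreal (exp (real n * c)) < EQ B n"
      "(\<integral>\<^sup>+ x. ennreal ((LR P Q n x) powr (2 + \<delta>)) * indicator {x. M n x \<in> closure B} x \<partial>(Q n)) < ennreal (exp (real n * C))"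
      using eventually_happens'[OF _ eventually_conj[OF eventually_gt_at_top[of 0] eventually_conj[OF _ T]]]
      by auto
    have "EQ B n \<le> 1 + ennreal (exp (real n * C))"
      using EQ_le_T[OF \<delta> B_meas, of n] n(3) by (meson add_left_mono less_imp_le order_trans)
    also have "\<dots> = ennreal (1 + exp (real n * C))" using ennreal_plus[of 1 "exp (real n * C)"] by simp
    also have "\<dots> \<le> ennreal (exp (real n * c))"
    proof (rule ennreal_leI)
      have a: "exp (real n * C) \<le> exp (real n * max C 0)" using n(1) by (simp add: mult_left_mono)
      have b: "1 \<le> exp (real n * max C 0)" using n(1) by simp
      have "2 \<le> exp (real n)"
      proof -
        have "2 \<le> 1 + real n" using n(1) by simp
        also have "\<dots> \<le> exp (real n)" by (rule exp_ge_add_one_self)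
        finally show ?thesis .
      qed
      then have "2 * exp (real n * max C 0) \<le> exp (real n) * exp (real n * max C 0)"
        by (intro mult_right_mono) auto
      also have "\<dots> = exp (real n * c)" unfolding c_def by (simp add: exp_add[symmetric] algebra_simps)
      finally show "1 + exp (real n * C) \<le> exp (real n * c)" using a b by linarith
    qed
    finally show False using n(2) by simp
  qed
  have Iinf: "(INF m\<in>B. I_P m) \<noteq> \<infinity>" using A1_fin by simp
  have Inn: "0 \<le> (INF m\<in>B. I_P m)"
    using A1_good unfolding good_rate_function_def rate_function_def by (auto intro: INF_greatest)
  obtain i where i: "(INF m\<in>B. I_P m) = ereal i" using Iinf Inn by (cases "INF m\<in>B. I_P m") auto
  have Ipi: "I \<noteq> \<infinity>"
  proof
    assume Ip: "I = \<infinity>"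
    have e1: "eventually (\<lambda>n. ennreal (exp (real n * (- (2 * i + 4)))) < EQ B n) sequentially"
      by (rule fin_above[OF B_meas A1_lim[unfolded i]])
    have e2: "eventually (\<lambda>n. EQ B n < ennreal (exp (real n * (- (2 * i + 4))))) sequentially"
      by (rule upper'[of "2 * i + 5"]) (simp_all add: Ip)
    from eventually_happens'[OF _ eventually_conj[OF e1 e2]] show False by auto
  qed
  obtain R where R: "I = ereal R" using Inm Ipi by (cases I) auto
  have lim: "(\<lambda>n. - nlog n (EQ B n)) \<longlonglongrightarrow> ereal R"
  proof (rule order_tendstoI)
    fix a assume "a < ereal R"
    then obtain y where y: "a < ereal y" "ereal y < ereal R" using ereal_dense2 by blast
    have "eventually (\<lambda>n. EQ B n < ennreal (exp (real n * (-y)))) sequentially"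
      by (rule upper'[of R]) (use y R in auto)
    then show "eventually (\<lambda>n. a < - nlog n (EQ B n)) sequentially"
      using eventually_gt_at_top[of 0]
    proof eventually_elim
      case (elim n)
      then have "nlog n (EQ B n) < ereal (-y)" by (simp add: nlog_less_iff)
      then have "ereal y < - nlog n (EQ B n)" by (metis ereal_less_uminus_reorder uminus_ereal.simps(1))
      then show ?case using y(1) by order
    qed
  next
    fix a assume "ereal R < a"
    then obtain y where y: "ereal R < ereal y" "ereal y < a" using ereal_dense2 by blast
    have "eventually (\<lambda>n. ennreal (exp (real n * (-y))) < EQ B n) sequentially"
      by (rule lower) (use y R in auto)
    then show "eventually (\<lambda>n. - nlog n (EQ B n) < a) sequentially"
      using eventually_gt_at_top[of 0]
    proof eventually_elim
      case (elim n)
      then have "ereal (-y) < nlog n (EQ B n)" by (simp add: less_nlog_iff)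
      then have "- nlog n (EQ B n) < ereal y" by (metis ereal_uminus_less_reorder uminus_ereal.simps(1))
      then show ?case using y(2) by order
    qed
  qed
  have eqJ: "(INF z\<in>B \<times> UNIV. ereal (snd z) + J_P z) = I"
    unfolding I_def
  proof (rule INF_cong[OF refl])
    fix z :: "'m \<times> real" assume "z \<in> B \<times> UNIV"
    obtain m w where z: "z = (m, w)" by (cases z)
    have "J_P (m, w) = ereal w + J_Q (m, w)" by (rule ident[OF A3a(1) rP A3b(1) rQ])
    then show "ereal (snd z) + J_P z = ereal (2 * snd z) + J_Q z"
      unfolding z by (cases "J_Q (m,w)") auto
  qed
  show ?thesis
    using lim R eqJ unfolding EQ_def I_def by auto
qed


end
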